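(* Let $i,j,h,k\in\{1,2,3\}$ with $i<j$, $h<k$. (1) If $Q\in R$ does not depend on $x_{ij}$, then there exists $\widetilde Q\in R$ not depending on $x_{ij}$ such that $D_4\widetilde Q=Q$. (2) If $Q\in R$ depends neither on $x_{ij}$ nor on $x_{hk}$, then there exists $\widetilde Q\in R$ depending neither on $x_{ij}$ nor on $x_{hk}$ such that $D_4\widetilde Q=Q$.
   Context: $R=\mathrm{Sym}(\mathbb C^4)\otimes\mathrm{Sym}(\Lambda^2\mathbb C^4)$ is identified with the polynomial ring $\mathbb C[x_1,x_2,x_3,x_4,x_{12},x_{13},x_{14},x_{23},x_{24},x_{34}]$, $\partial_i=\partial/\partial x_i$, $\partial_{ij}=\partial/\partial x_{ij}$, and $D_4=\partial_{12}\partial_3-\partial_{13}\partial_2+\partial_{23}\partial_1$. *)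

theory Defs
  imports Complex_Main
begin

text \<open>The ten variables of R = Sym(C^4) (x) Sym(Lambda^2 C^4).\<close>
datatype var = X1 | X2 | X3 | X4 | X12 | X13 | X14 | X23 | X24 | X34

text \<open>Monomials are exponent vectors (var is finite, so every function is finitely
supported).  A polynomial is a coefficient function with finite support.\<close>
type_synonym monomial = "var \<Rightarrow> nat"
type_synonym cpoly = "monomial \<Rightarrow> complex"

definition is_poly :: "cpoly \<Rightarrow> bool" where
  "is_poly P \<longleftrightarrow> finite {m. P m \<noteq> 0}"

definition pderiv_var :: "var \<Rightarrow> cpoly \<Rightarrow> cpoly" where
  "pderiv_var v P = (\<lambda>m. of_nat (m v + 1) * P (m(v := m v + 1)))"

definition D4 :: "cpoly \<Rightarrow> cpoly" where
  "D4 P = (\<lambda>m. pderiv_var X12 (pderiv_var X3 P) m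
              - pderiv_var X13 (pderiv_var X2 P) m
              + pderiv_var X23 (pderiv_var X1 P) m)"

definition indep_of :: "var \<Rightarrow> cpoly \<Rightarrow> bool" where
  "indep_of v P \<longleftrightarrow> (\<forall>m. P m \<noteq> 0 \<longrightarrow> m v = 0)"

definition xpair :: "nat \<Rightarrow> nat \<Rightarrow> var" where
  "xpair i j = (if (i, j) = (1, 2) then X12 else if (i, j) = (1, 3) then X13
     else if (i, j) = (1, 4) then X14 else if (i, j) = (2, 3) then X23
     else if (i, j) = (2, 4) then X24 else if (i, j) = (3, 4) then X34 else undefined)"

end

theory Submission
  imports Defs
begin

definition integ :: "var \<Rightarrow> var \<Rightarrow> complex \<Rightarrow> cpoly \<Rightarrow> cpoly" where
  "integ a b c Q = (\<lambda>m. if 0 < m a \<and> 0 < m b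
     then c * Q (m(a := m a - 1, b := m b - 1)) / (of_nat (m a) * of_nat (m b)) else 0)"

definition T :: "var \<Rightarrow> var \<Rightarrow> complex \<Rightarrow> cpoly \<Rightarrow> cpoly" where
  "T a b c P = (\<lambda>m. c * of_nat (m a + 1) * of_nat (m b + 1) * P (m(a := m a + 1, b := m b + 1)))"

definition mu :: "var \<Rightarrow> monomial \<Rightarrow> nat" where
  "mu b m = m X1 + m X2 + m X3 - m b"

lemma D4_alt: "D4 P m = T X12 X3 1 P m + T X13 X2 (-1) P m + T X23 X1 1 P m"
  unfolding D4_def T_def pderiv_var_def
  by (simp add: fun_upd_twist algebra_simps)

lemma T_integ_same:
  assumes "a \<noteq> b" shows "T a b c (integ a b c' Q) m = c * c' * Q m"
proof -
  have e: "m(a := m a + 1, b := m b + 1, a := m a, b := m b) = m"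
    using assms by (auto simp: fun_eq_iff)
  have "(of_nat (m a + 1) :: complex) \<noteq> 0" "(of_nat (m b + 1) :: complex) \<noteq> 0"
    by (simp_all del: of_nat_Suc)
  then show ?thesis using assms unfolding T_def integ_def
    by (simp add: e del: of_nat_Suc)
qed

lemma T_integ_other:
  assumes "a \<noteq> b" "a' \<noteq> a" "a' \<noteq> b" "b' \<noteq> a" "b' \<noteq> b" "a' \<noteq> b'"
    and "T a' b' c (integ a b c' Q) m \<noteq> 0"
  shows "Q (m(a' := m a' + 1, b' := m b' + 1, a := m a - 1, b := m b - 1)) \<noteq> 0"
  using assms unfolding T_def integ_def by (auto split: if_splits)

definition supp :: "cpoly \<Rightarrow> monomial set" where "supp P = {m. P m \<noteq> 0}"

lemma is_poly_integ:
  assumes "a \<noteq> b" "is_poly Q" shows "is_poly (integ a b c Q)"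
proof -
  have "{m. integ a b c Q m \<noteq> 0} \<subseteq> (\<lambda>m. m(a := m a+1, b := m b+1)) ` {m. Q m \<noteq> 0}"
  proof
    fix m assume "m \<in> {m. integ a b c Q m \<noteq> 0}"
    then have h: "0 < m a" "0 < m b" "Q (m(a := m a - 1, b := m b - 1)) \<noteq> 0"
      unfolding integ_def by (auto split: if_splits)
    have "m = (\<lambda>m. m(a := m a+1, b := m b+1)) (m(a := m a - 1, b := m b - 1))"
      using h assms by (auto simp: fun_eq_iff)
    then show "m \<in> (\<lambda>m. m(a := m a+1, b := m b+1)) ` {m. Q m \<noteq> 0}" using h by blast
  qed
  then show ?thesis using assms unfolding is_poly_def by (meson finite_imageI finite_subset)
qed

lemma is_poly_T:
  assumes "a \<noteq> b" "is_poly P" shows "is_poly (T a b c P)"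
proof -
  have "{m. T a b c P m \<noteq> 0} \<subseteq> (\<lambda>m. m(a := m a - 1, b := m b - 1)) ` {m. P m \<noteq> 0}"
  proof
    fix m assume "m \<in> {m. T a b c P m \<noteq> 0}"
    then have h: "P (m(a := m a + 1, b := m b + 1)) \<noteq> 0"
      unfolding T_def by auto
    have "m = (\<lambda>m. m(a := m a - 1, b := m b - 1)) (m(a := m a + 1, b := m b + 1))"
      using assms by (auto simp: fun_eq_iff)
    then show "m \<in> (\<lambda>m. m(a := m a - 1, b := m b - 1)) ` {m. P m \<noteq> 0}" using h by blast
  qed
  then show ?thesis using assms unfolding is_poly_def by (meson finite_imageI finite_subset)
qed

lemma is_poly_add:
  assumes "is_poly P" "is_poly R" shows "is_poly (\<lambda>m. P m + R m)" "is_poly (\<lambda>m. P m - R m)"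
proof -
  have "{m. P m + R m \<noteq> 0} \<subseteq> {m. P m \<noteq> 0} \<union> {m. R m \<noteq> 0}" by auto
  then show "is_poly (\<lambda>m. P m + R m)" using assms unfolding is_poly_def by (meson finite_Un finite_subset)
  have "{m. P m - R m \<noteq> 0} \<subseteq> {m. P m \<noteq> 0} \<union> {m. R m \<noteq> 0}" by auto
  then show "is_poly (\<lambda>m. P m - R m)" using assms unfolding is_poly_def by (meson finite_Un finite_subset)
qed

lemma is_poly_D4: "is_poly P \<Longrightarrow> is_poly (D4 P)"
proof -
  assume p: "is_poly P"
  have "D4 P = (\<lambda>m. (\<lambda>m. T X12 X3 1 P m + T X13 X2 (-1) P m) m + T X23 X1 1 P m)"
    by (simp add: fun_eq_iff D4_alt)
  then show ?thesis using p by (simp add: is_poly_add is_poly_T)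
qed

lemma indep_integ: "indep_of v P \<Longrightarrow> v \<noteq> a \<Longrightarrow> v \<noteq> b \<Longrightarrow> indep_of v (integ a b c P)"
  unfolding indep_of_def integ_def by (auto split: if_splits)

lemma indep_T: "indep_of v P \<Longrightarrow> indep_of v (T a b c P)"
  unfolding indep_of_def T_def by (auto split: if_splits)

lemma indep_add: "indep_of v P \<Longrightarrow> indep_of v R \<Longrightarrow> indep_of v (\<lambda>m. P m + R m)"
  "indep_of v P \<Longrightarrow> indep_of v R \<Longrightarrow> indep_of v (\<lambda>m. P m - R m)"
  unfolding indep_of_def by (metis add.right_neutral, metis diff_self)

lemma indep_D4: "indep_of v P \<Longrightarrow> indep_of v (D4 P)"
proof -
  assume p: "indep_of v P"
  have "D4 P = (\<lambda>m. (\<lambda>m. T X12 X3 1 P m + T X13 X2 (-1) P m) m + T X23 X1 1 P m)"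
    by (simp add: fun_eq_iff D4_alt)
  then show ?thesis using p by (simp add: indep_add indep_T)
qed

lemma D4_diff: "D4 (\<lambda>m. P m - R m) = (\<lambda>m. D4 P m - D4 R m)"
  unfolding D4_def pderiv_var_def by (simp add: fun_eq_iff algebra_simps)

lemma D4_zero: "D4 (\<lambda>m. 0) = (\<lambda>m. 0)"
  unfolding D4_def pderiv_var_def by simp


lemma E_bound:
  assumes abc: "(a,b,c::complex) \<in> {(X12,X3,1),(X13,X2,-1),(X23,X1,1)}"
    and bd: "\<forall>m. Q m \<noteq> 0 \<longrightarrow> mu b m < Suc N"
    and ne: "D4 (integ a b c Q) m - Q m \<noteq> 0"
  shows "mu b m < N"
proof -
  have cc: "c * c = 1" using abc by auto
  from abc consider "a = X12" "b = X3" "c = 1" | "a = X13" "b = X2" "c = -1" | "a = X23" "b = X1" "c = 1"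
    by auto
  then show ?thesis
  proof cases
    case 1
    then have "T X13 X2 (-1) (integ a b c Q) m + T X23 X1 1 (integ a b c Q) m \<noteq> 0"
      using ne by (simp add: D4_alt T_integ_same)
    then have "T X13 X2 (-1) (integ a b c Q) m \<noteq> 0 \<or> T X23 X1 1 (integ a b c Q) m \<noteq> 0" by auto
    then show ?thesis
    proof
      assume "T X13 X2 (-1) (integ a b c Q) m \<noteq> 0"
      from T_integ_other[OF _ _ _ _ _ _ this] 1 bd show ?thesis by (fastforce simp: mu_def)
    next
      assume "T X23 X1 1 (integ a b c Q) m \<noteq> 0"
      from T_integ_other[OF _ _ _ _ _ _ this] 1 bd show ?thesis by (fastforce simp: mu_def)
    qed
  next
    case 2
    then have "T X12 X3 1 (integ a b c Q) m + T X23 X1 1 (integ a b c Q) m \<noteq> 0"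
      using ne by (simp add: D4_alt T_integ_same)
    then have "T X12 X3 1 (integ a b c Q) m \<noteq> 0 \<or> T X23 X1 1 (integ a b c Q) m \<noteq> 0" by auto
    then show ?thesis
    proof
      assume "T X12 X3 1 (integ a b c Q) m \<noteq> 0"
      from T_integ_other[OF _ _ _ _ _ _ this] 2 bd show ?thesis by (fastforce simp: mu_def)
    next
      assume "T X23 X1 1 (integ a b c Q) m \<noteq> 0"
      from T_integ_other[OF _ _ _ _ _ _ this] 2 bd show ?thesis by (fastforce simp: mu_def)
    qed
  next
    case 3
    then have "T X12 X3 1 (integ a b c Q) m + T X13 X2 (-1) (integ a b c Q) m \<noteq> 0"
      using ne by (simp add: D4_alt T_integ_same)
    then have "T X12 X3 1 (integ a b c Q) m \<noteq> 0 \<or> T X13 X2 (-1) (integ a b c Q) m \<noteq> 0" by auto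
    then show ?thesis
    proof
      assume "T X12 X3 1 (integ a b c Q) m \<noteq> 0"
      from T_integ_other[OF _ _ _ _ _ _ this] 3 bd show ?thesis by (fastforce simp: mu_def)
    next
      assume "T X13 X2 (-1) (integ a b c Q) m \<noteq> 0"
      from T_integ_other[OF _ _ _ _ _ _ this] 3 bd show ?thesis by (fastforce simp: mu_def)
    qed
  qed
qed

lemma solve_N:
  assumes abc: "(a,b,c::complex) \<in> {(X12,X3,1),(X13,X2,-1),(X23,X1,1)}" and aS: "a \<notin> S" "b \<notin> S"
  shows "is_poly Q \<Longrightarrow> (\<forall>v\<in>S. indep_of v Q) \<Longrightarrow> (\<forall>m. Q m \<noteq> 0 \<longrightarrow> mu b m < N)
     \<Longrightarrow> \<exists>Qt. is_poly Qt \<and> (\<forall>v\<in>S. indep_of v Qt) \<and> D4 Qt = Q"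
proof (induction N arbitrary: Q)
  case 0
  then have "Q = (\<lambda>m. 0)" by auto
  moreover have "is_poly (\<lambda>m::monomial. 0::complex)" by (simp add: is_poly_def)
  moreover have "indep_of v (\<lambda>m::monomial. 0::complex)" for v by (simp add: indep_of_def)
  ultimately show ?case using D4_zero by blast
next
  case (Suc N)
  have ab: "a \<noteq> b" using abc by auto
  define Q1 where "Q1 = integ a b c Q"
  define E where "E = (\<lambda>m. D4 Q1 m - Q m)"
  have pQ1: "is_poly Q1" unfolding Q1_def using is_poly_integ[OF ab Suc.prems(1)] .
  have iQ1: "\<forall>v\<in>S. indep_of v Q1" unfolding Q1_def using Suc.prems(2) aS
    by (metis indep_integ)
  have pE: "is_poly E" unfolding E_def using is_poly_add(2) is_poly_D4 pQ1 Suc.prems(1) by blast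
  have iE: "\<forall>v\<in>S. indep_of v E" unfolding E_def using indep_add(2) indep_D4 iQ1 Suc.prems(2) by blast
  have bE: "\<forall>m. E m \<noteq> 0 \<longrightarrow> mu b m < N" unfolding E_def Q1_def
    using E_bound[OF abc Suc.prems(3)] by blast
  obtain R where R: "is_poly R" "\<forall>v\<in>S. indep_of v R" "D4 R = E" using Suc.IH[OF pE iE bE] by blast
  have "is_poly (\<lambda>m. Q1 m - R m)" using is_poly_add(2) pQ1 R(1) by blast
  moreover have "\<forall>v\<in>S. indep_of v (\<lambda>m. Q1 m - R m)" using indep_add(2) iQ1 R(2) by blast
  moreover have "D4 (\<lambda>m. Q1 m - R m) = Q" using R(3) unfolding D4_diff E_def by simp
  ultimately show ?case by blast
qed

lemma solve:
  assumes abc: "(a,b,c::complex) \<in> {(X12,X3,1),(X13,X2,-1),(X23,X1,1)}" and aS: "a \<notin> S" "b \<notin> S"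
    and "is_poly Q" "\<forall>v\<in>S. indep_of v Q"
  shows "\<exists>Qt. is_poly Qt \<and> (\<forall>v\<in>S. indep_of v Qt) \<and> D4 Qt = Q"
proof -
  have "finite (mu b ` {m. Q m \<noteq> 0})" using assms(4) unfolding is_poly_def by simp
  then obtain N where "\<forall>x \<in> mu b ` {m. Q m \<noteq> 0}. x < N"
    using finite_nat_set_iff_bounded by blast
  then have "\<forall>m. Q m \<noteq> 0 \<longrightarrow> mu b m < N" by blast
  then show ?thesis using solve_N[OF abc aS] assms(4,5) by blast
qed

theorem mainTheorem6:
  fixes i j h k :: nat
  assumes "i \<in> {1,2,3}" "j \<in> {1,2,3}" "h \<in> {1,2,3}" "k \<in> {1,2,3}"
    and "i < j" "h < k"
  shows "(\<forall>Q. is_poly Q \<and> indep_of (xpair i j) Q \<longrightarrow>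
            (\<exists>Qt. is_poly Qt \<and> indep_of (xpair i j) Qt \<and> D4 Qt = Q))
       \<and> (\<forall>Q. is_poly Q \<and> indep_of (xpair i j) Q \<and> indep_of (xpair h k) Q \<longrightarrow>
            (\<exists>Qt. is_poly Qt \<and> indep_of (xpair i j) Qt \<and> indep_of (xpair h k) Qt
                  \<and> D4 Qt = Q))"
proof -
  have x1: "xpair i j \<in> {X12,X13,X23}" using assms(1,2,5) by (auto simp: xpair_def)
  have x2: "xpair h k \<in> {X12,X13,X23}" using assms(3,4,6) by (auto simp: xpair_def)
  obtain a b c where abc: "(a,b,c::complex) \<in> {(X12,X3,1),(X13,X2,-1),(X23,X1,1)}"
    and aS: "a \<notin> {xpair i j, xpair h k}" "b \<notin> {xpair i j, xpair h k}"
  proof -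
    consider "X12 \<notin> {xpair i j, xpair h k}" | "X13 \<notin> {xpair i j, xpair h k}"
      | "X23 \<notin> {xpair i j, xpair h k}" using x1 x2 by auto
    then show ?thesis
    proof cases
      case 1 then show ?thesis using that[of X12 X3 1] x1 x2 by auto
    next
      case 2 then show ?thesis using that[of X13 X2 "-1"] x1 x2 by auto
    next
      case 3 then show ?thesis using that[of X23 X1 1] x1 x2 by auto
    qed
  qed
  have aS1: "a \<notin> {xpair i j}" "b \<notin> {xpair i j}" using aS by auto
  show ?thesis
  proof (intro conjI allI impI)
    fix Q assume "is_poly Q \<and> indep_of (xpair i j) Q"
    then show "\<exists>Qt. is_poly Qt \<and> indep_of (xpair i j) Qt \<and> D4 Qt = Q"
      using solve[OF abc aS1, of Q] by auto
  next
    fix Q assume "is_poly Q \<and> indep_of (xpair i j) Q \<and> indep_of (xpair h k) Q"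
    then show "\<exists>Qt. is_poly Qt \<and> indep_of (xpair i j) Qt \<and> indep_of (xpair h k) Qt \<and> D4 Qt = Q"
      using solve[OF abc aS, of Q] by auto
  qed
qed

end
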